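(* Let $\theta:(0,1)\to(0,\infty)$ be $C^1$, $X(r)=\int_{1/2}^r\theta(s)^{-1/2}ds$, $\mathcal F(r)=\frac12X(r)^2$, and let $\mathcal A(r_0,r_1)$ be the minimal action $$\mathcal A(r_0,r_1)=\inf\Big\{\int_0^1\Big(\frac{\dot r^2}{2\theta(r)}+\frac{\theta(r)}2\Big(\frac{d\mathcal F}{dr}(r)\Big)^2\Big)dt:\ r\in C^1([0,1];(0,1)),\ r(0)=r_0,\ r(1)=r_1\Big\}.$$ Define $D(r_0,r_1)=\mathcal A(r_0,r_1)-\frac12\mathcal A(r_0,r_0)-\frac12\mathcal A(r_1,r_1)$. Then for all $r_0,r_1\in(0,1)$, $$D(r_0,r_1)=\frac{1}{2\sinh1}\Big(\int_{r_0}^{r_1}\frac{ds}{\sqrt{\theta(s)}}\Big)^2.$$ *)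

theory Defs
  imports "HOL-Analysis.Analysis"
begin

definition oint :: "real \<Rightarrow> real \<Rightarrow> (real \<Rightarrow> real) \<Rightarrow> real" where
  "oint a b f = (if a \<le> b then integral {a..b} f else - integral {b..a} f)"

definition Xfun :: "(real \<Rightarrow> real) \<Rightarrow> real \<Rightarrow> real" where
  "Xfun \<theta> r = oint (1/2) r (\<lambda>s. 1 / sqrt (\<theta> s))"

definition Ffun :: "(real \<Rightarrow> real) \<Rightarrow> real \<Rightarrow> real" where
  "Ffun \<theta> r = (Xfun \<theta> r)^2 / 2"

definition admissible_path :: "(real \<Rightarrow> real) \<Rightarrow> (real \<Rightarrow> real) \<Rightarrow> bool" where
  "admissible_path r r' \<longleftrightarrow>
     (\<forall>t\<in>{0..1}. (r has_real_derivative r' t) (at t within {0..1})) \<and>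
     continuous_on {0..1} r' \<and> (\<forall>t\<in>{0..1}. r t \<in> {0<..<1})"

definition action :: "(real \<Rightarrow> real) \<Rightarrow> (real \<Rightarrow> real) \<Rightarrow> (real \<Rightarrow> real) \<Rightarrow> real" where
  "action \<theta> r r' = integral {0..1}
     (\<lambda>t. (r' t)^2 / (2 * \<theta> (r t)) + \<theta> (r t) / 2 * (deriv (Ffun \<theta>) (r t))^2)"

definition min_action :: "(real \<Rightarrow> real) \<Rightarrow> real \<Rightarrow> real \<Rightarrow> real" where
  "min_action \<theta> r0 r1 = Inf {action \<theta> r r' | r r'.
      admissible_path r r' \<and> r 0 = r0 \<and> r 1 = r1}"

definition Dfun :: "(real \<Rightarrow> real) \<Rightarrow> real \<Rightarrow> real \<Rightarrow> real" where
  "Dfun \<theta> r0 r1 = min_action \<theta> r0 r1 - min_action \<theta> r0 r0 / 2 - min_action \<theta> r1 r1 / 2"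

end

theory Submission
  imports Defs
begin

lemma oint_split:
  fixes f :: "real \<Rightarrow> real"
  assumes cf: "continuous_on {0<..<1} f"
    and a: "a \<in> {0<..<1}" and b: "b \<in> {0<..<1}" and c: "c \<in> {0<..<1}"
  shows "oint a b f + oint b c f = oint a c f"
proof -
  have I: "f integrable_on {u..v}" if "u \<in> {0<..<1}" "v \<in> {0<..<1}" for u v
    by (rule integrable_continuous_real, rule continuous_on_subset[OF cf]) (use that in auto)
  have C: "integral {u..v} f + integral {v..w} f = integral {u..w} f"
    if "u \<le> v" "v \<le> w" "u \<in> {0<..<1}" "w \<in> {0<..<1}" for u v w
    using Henstock_Kurzweil_Integration.integral_combine[OF that(1,2) I[OF that(3,4)]] .
  show ?thesis
    using C[of a b c] C[of a c b] C[of b a c] C[of b c a] C[of c a b] C[of c b a] a b c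
    unfolding oint_def by (auto split: if_splits)
qed

lemma X_diff:
  assumes cf: "continuous_on {0<..<1} (\<lambda>s. 1 / sqrt (\<theta> s))"
    and a: "a \<in> {0<..<1}" and b: "b \<in> {0<..<1}"
  shows "Xfun \<theta> b - Xfun \<theta> a = oint a b (\<lambda>s. 1 / sqrt (\<theta> s))"
  using oint_split[OF cf, of "1/2" a b] a b unfolding Xfun_def by auto

lemma X_deriv:
  assumes cf: "continuous_on {0<..<1} (\<lambda>s. 1 / sqrt (\<theta> s))"
    and x: "x \<in> {0<..<1}"
  shows "(Xfun \<theta> has_real_derivative (1 / sqrt (\<theta> x))) (at x)"
proof -
  define a where "a = x/2"
  define b where "b = (x+1)/2"
  have ab: "a \<in> {0<..<1}" "b \<in> {0<..<1}" "a < x" "x < b" using x by (auto simp: a_def b_def)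
  have cab: "continuous_on {a..b} (\<lambda>s. 1 / sqrt (\<theta> s))"
    by (rule continuous_on_subset[OF cf]) (use ab in auto)
  have "((\<lambda>u. integral {a..u} (\<lambda>s. 1 / sqrt (\<theta> s))) has_vector_derivative (1 / sqrt (\<theta> x))) (at x within {a..b})"
    using integral_has_vector_derivative[OF cab] ab by auto
  moreover have "at x within {a..b} = at x" using ab by (intro at_within_interior) auto
  ultimately have "((\<lambda>u. integral {a..u} (\<lambda>s. 1 / sqrt (\<theta> s))) has_real_derivative (1 / sqrt (\<theta> x))) (at x)"
    by (simp add: has_real_derivative_iff_has_vector_derivative)
  then have d: "((\<lambda>u. Xfun \<theta> a + integral {a..u} (\<lambda>s. 1 / sqrt (\<theta> s))) has_real_derivative (1 / sqrt (\<theta> x))) (at x)"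
    using DERIV_add[OF DERIV_const] by fastforce
  show ?thesis
  proof (rule has_field_derivative_transform_within_open[OF d, of "{a<..<b}"])
    fix u assume u: "u \<in> {a<..<b}"
    then have "u \<in> {0<..<1}" using ab by auto
    then show "Xfun \<theta> a + integral {a..u} (\<lambda>s. 1 / sqrt (\<theta> s)) = Xfun \<theta> u"
      using X_diff[OF cf ab(1), of u] u by (simp add: oint_def)
  qed (use ab in simp_all)
qed

lemma X_mono:
  assumes cf: "continuous_on {0<..<1} (\<lambda>s. 1 / sqrt (\<theta> s))"
    and pos: "\<forall>s\<in>{0<..<1}. \<theta> s > 0"
    and a: "a \<in> {0<..<1}" and b: "b \<in> {0<..<1}" and ab: "a < b"
  shows "Xfun \<theta> a < Xfun \<theta> b"
proof (rule DERIV_pos_imp_increasing[OF ab])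
  fix x assume "a \<le> x" "x \<le> b"
  then have x: "x \<in> {0<..<1}" using a b by auto
  show "\<exists>y. DERIV (Xfun \<theta>) x :> y \<and> y > 0"
    using X_deriv[OF cf x] pos x by auto
qed

lemma F_deriv:
  assumes cf: "continuous_on {0<..<1} (\<lambda>s. 1 / sqrt (\<theta> s))"
    and x: "x \<in> {0<..<1}"
  shows "deriv (Ffun \<theta>) x = Xfun \<theta> x * (1 / sqrt (\<theta> x))"
proof -
  have e: "Ffun \<theta> = (\<lambda>r. (Xfun \<theta> r)^2 / 2)" by (rule ext) (simp add: Ffun_def)
  have "(Ffun \<theta> has_real_derivative Xfun \<theta> x * (1 / sqrt (\<theta> x))) (at x)"
    unfolding e using X_deriv[OF cf x]
    by (auto intro!: derivative_eq_intros)
  then show ?thesis by (rule DERIV_imp_deriv)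
qed

lemma alg: fixes C S X x' b :: real assumes c: "C > 0" and cs: "C*C - S*S = 1"
shows "((C * C - S * S) * (X)\<^sup>2 * 2 / (C * C) +
      4 * (x' * (X * S)) / C) /
     4 +
     (x' * b * C - b * X * S) / (C * C) -
     (C * b\<^sup>2 * (2 * C) - b\<^sup>2 * S * (S * 2)) /
     (4 * (C * C)) =
     (x'\<^sup>2 + (X)\<^sup>2) / 2 -
     (x' - S * X / C - b / C)\<^sup>2 /
     2"
proof -
  have s: "S*S = C*C - 1" using cs by simp
  show ?thesis using c apply (simp add: cs field_simps power2_eq_square)
    using s by algebra

qed

definition Phi :: "real \<Rightarrow> real \<Rightarrow> real \<Rightarrow> real" where
  "Phi b t x = sinh t / cosh t * x^2/2 + b * x / cosh t - b^2 * sinh t / (2 * cosh t)"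

lemma Phi_deriv:
  assumes "(x has_real_derivative x') (at t within S)"
  shows "((\<lambda>t. Phi b t (x t)) has_real_derivative
     ((x'^2 + (x t)^2)/2 - (x' - sinh t / cosh t * x t - b / cosh t)^2/2)) (at t within S)"
proof -
  have c: "cosh t > 0" by simp 
  have cs: "(cosh t)^2 = 1 + (sinh t)^2" by (simp add: cosh_square_eq)
  show ?thesis unfolding Phi_def
    apply (rule derivative_eq_intros refl assms | simp add: c)+
    apply (rule alg) using cs by (simp_all add: power2_eq_square)
qed

lemma action_formula:
  fixes b :: real
  assumes cf: "continuous_on {0<..<1} (\<lambda>s. 1 / sqrt (\<theta> s))"
    and pos: "\<forall>s\<in>{0<..<1}. \<theta> s > 0"
    and adm: "admissible_path r r'"
  defines "P \<equiv> (\<lambda>t. (r' t * (1 / sqrt (\<theta> (r t))) - sinh t / cosh t * Xfun \<theta> (r t) - b / cosh t)^2 / 2)"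
  shows "action \<theta> r r' = Phi b 1 (Xfun \<theta> (r 1)) - Phi b 0 (Xfun \<theta> (r 0)) + integral {0..1} P"
    and "integral {0..1} P \<ge> 0"
proof -
  define x where "x = (\<lambda>t. Xfun \<theta> (r t))"
  define x' where "x' = (\<lambda>t. r' t * (1 / sqrt (\<theta> (r t))))"
  have rd: "\<And>t. t \<in> {0..1} \<Longrightarrow> (r has_real_derivative r' t) (at t within {0..1})"
    and r'c: "continuous_on {0..1} r'" and rin: "\<And>t. t \<in> {0..1} \<Longrightarrow> r t \<in> {0<..<1}"
    using adm unfolding admissible_path_def by auto
  have xd: "(x has_real_derivative x' t) (at t within {0..1})" if t: "t \<in> {0..1}" for t
    using DERIV_chain2[OF X_deriv[OF cf rin[OF t]] rd[OF t]] unfolding x_def x'_def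
    by (simp add: mult.commute)
  have rc: "continuous_on {0..1} r" by (rule DERIV_continuous_on[OF rd])
  have xc: "continuous_on {0..1} x" by (rule DERIV_continuous_on[OF xd])
  have gc: "continuous_on {0..1} (\<lambda>t. 1 / sqrt (\<theta> (r t)))"
    by (rule continuous_on_compose2[OF cf rc]) (use rin in auto)
  have x'c: "continuous_on {0..1} x'" unfolding x'_def by (intro continuous_intros r'c gc)
  have Pe: "P = (\<lambda>t. (x' t - sinh t / cosh t * x t - b / cosh t)^2 / 2)"
    by (simp add: P_def x_def x'_def)
  have Pc: "continuous_on {0..1} P" unfolding Pe
    by (intro continuous_intros xc x'c) auto
  have Pint: "(P has_integral integral {0..1} P) {0..1}"
    using integrable_continuous_real[OF Pc] by (simp add: has_integral_integral)
  define Q where "Q = (\<lambda>t. ((x' t)^2 + (x t)^2)/2 - (x' t - sinh t / cosh t * x t - b / cosh t)^2/2)"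
  have Qd: "((\<lambda>t. Phi b t (x t)) has_vector_derivative Q t) (at t within {0..1})" if "t \<in> {0..1}" for t
    using Phi_deriv[OF xd[OF that], of b] unfolding Q_def
    by (simp add: has_real_derivative_iff_has_vector_derivative)
  have Qint: "(Q has_integral (Phi b 1 (x 1) - Phi b 0 (x 0))) {0..1}"
    using fundamental_theorem_of_calculus[OF _ Qd] by simp
  have sum: "((\<lambda>t. Q t + P t) has_integral (Phi b 1 (x 1) - Phi b 0 (x 0) + integral {0..1} P)) {0..1}"
    by (rule has_integral_add[OF Qint Pint])
  have eq: "Q t + P t = (r' t)^2 / (2 * \<theta> (r t)) + \<theta> (r t) / 2 * (deriv (Ffun \<theta>) (r t))^2"
    if t: "t \<in> {0..1}" for t
  proof -
    have th: "\<theta> (r t) > 0" using pos rin[OF t] by auto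
    have g2: "(1 / sqrt (\<theta> (r t)))^2 = 1 / \<theta> (r t)" using th by (simp add: power_divide)
    show ?thesis unfolding F_deriv[OF cf rin[OF t]] Q_def P_def x_def x'_def
      using th g2 by (simp add: power_mult_distrib field_simps)
  qed
  have "((\<lambda>t. (r' t)^2 / (2 * \<theta> (r t)) + \<theta> (r t) / 2 * (deriv (Ffun \<theta>) (r t))^2) has_integral
      (Phi b 1 (x 1) - Phi b 0 (x 0) + integral {0..1} P)) {0..1}"
    using sum by (rule has_integral_eq[rotated]) (use eq in auto)
  then show "action \<theta> r r' = Phi b 1 (Xfun \<theta> (r 1)) - Phi b 0 (Xfun \<theta> (r 0)) + integral {0..1} P"
    unfolding action_def x_def by (rule integral_unique)
  show "integral {0..1} P \<ge> 0"
    by (rule integral_nonneg[OF integrable_continuous_real[OF Pc]]) (simp add: P_def)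
qed

lemma sinh_sum_le:
  fixes t :: real assumes t: "0 \<le> t" "t \<le> 1"
  shows "sinh (1 - t) + sinh t \<le> sinh 1"
proof -
  define u where "u = t - 1/2"
  have e1: "sinh (1 - t) = sinh (1/2) * cosh u - cosh (1/2) * sinh u"
    using sinh_diff[of "1/2" u] by (simp add: u_def)
  have e2: "sinh t = sinh (1/2) * cosh u + cosh (1/2) * sinh u"
    using sinh_add[of "1/2" u] by (simp add: u_def)
  have e3: "sinh (1::real) = sinh (1/2) * cosh (1/2) + cosh (1/2) * sinh (1/2)"
    using sinh_add[of "1/2::real" "1/2"] by simp
  have cu: "cosh u \<le> cosh (1/2)"
  proof (cases "u \<ge> 0")
    case True then show ?thesis using t by (subst cosh_real_nonneg_le_iff) (auto simp: u_def)
  next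
    case False
    then have "cosh u = cosh (-u)" by simp
    also have "\<dots> \<le> cosh (1/2)" using t False by (subst cosh_real_nonneg_le_iff) (auto simp: u_def)
    finally show ?thesis .
  qed
  have "sinh (1/2::real) > 0" by simp
  then have "sinh (1/2) * cosh u \<le> sinh (1/2) * cosh (1/2)" using cu by (intro mult_left_mono) auto
  then show ?thesis unfolding e1 e2 e3 by simp
qed

lemma path_range:
  fixes t x0 x1 m M :: real
  assumes t: "0 \<le> t" "t \<le> 1"
    and m: "m \<le> 0" "m \<le> x0" "m \<le> x1" and M: "0 \<le> M" "x0 \<le> M" "x1 \<le> M"
  shows "m \<le> (x0 * sinh (1 - t) + x1 * sinh t) / sinh 1"
    and "(x0 * sinh (1 - t) + x1 * sinh t) / sinh 1 \<le> M"
proof -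
  have s1: "sinh (1::real) > 0" by simp
  have a: "sinh (1 - t) \<ge> 0" "sinh t \<ge> 0" using t by auto
  have le: "sinh (1 - t) + sinh t \<le> sinh 1" by (rule sinh_sum_le[OF t])
  have "m * sinh 1 \<le> m * (sinh (1 - t) + sinh t)" using le m(1) by (rule mult_left_mono_neg)
  also have "\<dots> \<le> x0 * sinh (1 - t) + x1 * sinh t"
    using mult_right_mono[OF m(2) a(1)] mult_right_mono[OF m(3) a(2)] by (simp add: algebra_simps)
  finally show "m \<le> (x0 * sinh (1 - t) + x1 * sinh t) / sinh 1" using s1 by (simp add: field_simps)
  have "x0 * sinh (1 - t) + x1 * sinh t \<le> M * (sinh (1 - t) + sinh t)"
    using mult_right_mono[OF M(2) a(1)] mult_right_mono[OF M(3) a(2)] by (simp add: algebra_simps)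
  also have "\<dots> \<le> M * sinh 1" using le M(1) by (rule mult_left_mono)
  finally show "(x0 * sinh (1 - t) + x1 * sinh t) / sinh 1 \<le> M" using s1 by (simp add: field_simps)
qed

lemma X_le:
  assumes cf: "continuous_on {0<..<1} (\<lambda>s. 1 / sqrt (\<theta> s))"
    and pos: "\<forall>s\<in>{0<..<1}. \<theta> s > 0"
    and a: "a \<in> {0<..<1}" and b: "b \<in> {0<..<1}" and ab: "a \<le> b"
  shows "Xfun \<theta> a \<le> Xfun \<theta> b"
  using X_mono[OF cf pos a b] ab by (cases "a = b") auto

definition Mf :: "real \<Rightarrow> real \<Rightarrow> real" where
  "Mf x0 x1 = Phi ((x1 - x0 * cosh 1) / sinh 1) 1 x1 - Phi ((x1 - x0 * cosh 1) / sinh 1) 0 x0"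

lemma optimal_path:
  assumes cf: "continuous_on {0<..<1} (\<lambda>s. 1 / sqrt (\<theta> s))"
    and thc: "continuous_on {0<..<1} \<theta>"
    and pos: "\<forall>s\<in>{0<..<1}. \<theta> s > 0"
    and r0: "r0 \<in> {0<..<1}" and r1: "r1 \<in> {0<..<1}"
  shows "\<exists>r r'. admissible_path r r' \<and> r 0 = r0 \<and> r 1 = r1 \<and>
           action \<theta> r r' = Mf (Xfun \<theta> r0) (Xfun \<theta> r1)"
proof -
  define X where "X = Xfun \<theta>"
  define g where "g = (\<lambda>s. 1 / sqrt (\<theta> s))"
  define x0 where "x0 = X r0"
  define x1 where "x1 = X r1"
  define \<beta> where "\<beta> = (x1 - x0 * cosh 1) / sinh 1"
  define xs where "xs = (\<lambda>t::real. x0 * cosh t + \<beta> * sinh t)"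
  define xs' where "xs' = (\<lambda>t::real. x0 * sinh t + \<beta> * cosh t)"
  have s1: "sinh (1::real) > 0" by simp
  have xs_alt: "xs t = (x0 * sinh (1 - t) + x1 * sinh t) / sinh 1" for t
    unfolding xs_def \<beta>_def sinh_diff using s1 by (simp add: field_simps)
  have xs_d: "(xs has_real_derivative xs' t) (at t within S)" for t S
    unfolding xs_def xs'_def by (auto intro!: derivative_eq_intros)
  define lo where "lo = min r0 (min r1 (1/2))"
  define hi where "hi = max r0 (max r1 (1/2))"
  define lo' where "lo' = lo / 2"
  define hi' where "hi' = (hi + 1) / 2"
  have lohi: "0 < lo'" "lo' < lo" "lo \<le> hi" "hi < hi'" "hi' < 1"
    using r0 r1 by (auto simp: lo_def hi_def lo'_def hi'_def)
  have in01: "z \<in> {0<..<1}" if "lo' \<le> z" "z \<le> hi'" for z using that lohi by auto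
  have Xc: "continuous_on {lo'..hi'} X"
  proof (rule DERIV_continuous_on)
    fix z assume "z \<in> {lo'..hi'}"
    then have "z \<in> {0<..<1}" using in01 by auto
    then show "(X has_real_derivative g z) (at z within {lo'..hi'})"
      unfolding X_def g_def by (rule has_field_derivative_at_within[OF X_deriv[OF cf]])
  qed
  have Xstrict: "X a < X b" if "lo' \<le> a" "b \<le> hi'" "a < b" for a b
    unfolding X_def by (rule X_mono[OF cf pos]) (use that in01 in auto)
  define Xinv where "Xinv = (\<lambda>y. SOME z. lo' \<le> z \<and> z \<le> hi' \<and> X z = y)"
  have Xinv: "lo' \<le> Xinv y \<and> Xinv y \<le> hi' \<and> X (Xinv y) = y" if "X lo' \<le> y" "y \<le> X hi'" for y
    unfolding Xinv_def by (rule someI_ex, rule IVT'[OF that _ Xc]) (use lohi in auto)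
  have Xinj: "z = w" if "lo' \<le> z" "z \<le> hi'" "lo' \<le> w" "w \<le> hi'" "X z = X w" for z w
    using Xstrict[of z w] Xstrict[of w z] that by (cases z w rule: linorder_cases) auto
  have Xinv_X: "Xinv (X z) = z" if "lo' \<le> z" "z \<le> hi'" for z
  proof -
    have a: "X lo' \<le> X z" using Xstrict[of lo' z] that lohi by (cases "lo' = z") auto
    have b: "X z \<le> X hi'" using Xstrict[of z hi'] that lohi by (cases "z = hi'") auto
    have i: "lo' \<le> Xinv (X z)" "Xinv (X z) \<le> hi'" "X (Xinv (X z)) = X z" using Xinv[OF a b] by auto
    show ?thesis by (rule Xinj[OF i(1,2) that i(3)])
  qed
  have X12: "X (1/2) = 0" by (simp add: X_def Xfun_def oint_def)
  have Xlo: "X lo' < X lo" "X hi < X hi'" using Xstrict lohi by auto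
  have lo_in: "lo \<in> {0<..<1}" "hi \<in> {0<..<1}" using lohi by auto
  have lo_le: "lo \<le> 1/2" "lo \<le> r0" "lo \<le> r1" "1/2 \<le> hi" "r0 \<le> hi" "r1 \<le> hi"
    by (auto simp: lo_def hi_def)
  have h: "(1/2::real) \<in> {0<..<1}" by simp
  have Xlo_le: "X lo \<le> 0" "X lo \<le> x0" "X lo \<le> x1" "0 \<le> X hi" "x0 \<le> X hi" "x1 \<le> X hi"
    using X_le[OF cf pos lo_in(1) h lo_le(1)] X_le[OF cf pos lo_in(1) r0 lo_le(2)]
      X_le[OF cf pos lo_in(1) r1 lo_le(3)] X_le[OF cf pos h lo_in(2) lo_le(4)]
      X_le[OF cf pos r0 lo_in(2) lo_le(5)] X_le[OF cf pos r1 lo_in(2) lo_le(6)] X12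
    unfolding x0_def x1_def X_def by auto
  have xs_rng: "X lo \<le> xs t \<and> xs t \<le> X hi" if "0 \<le> t" "t \<le> 1" for t
    unfolding xs_alt using path_range[OF that Xlo_le(1-3) Xlo_le(4-6)] by auto
  define rs where "rs = (\<lambda>t. Xinv (xs t))"
  have rs: "lo' \<le> rs t \<and> rs t \<le> hi' \<and> X (rs t) = xs t" if "0 \<le> t" "t \<le> 1" for t
  proof -
    have a: "X lo' \<le> xs t" "xs t \<le> X hi'" using xs_rng[OF that] Xlo by linarith+
    show ?thesis unfolding rs_def by (rule Xinv[OF a])
  qed
  have rs_d: "(rs has_real_derivative sqrt (\<theta> (rs t)) * xs' t) (at t within {0..1})"
    if t: "t \<in> {0..1}" for t
  proof -
    have rt: "lo' \<le> rs t" "rs t \<le> hi'" "X (rs t) = xs t" using rs t by auto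
    have rt2: "lo \<le> rs t" "rs t \<le> hi"
    proof -
      show "lo \<le> rs t"
      proof (rule ccontr)
        assume "\<not> lo \<le> rs t"
        then have "X (rs t) < X lo" using Xstrict[of "rs t" lo] rt lohi by auto
        then show False using xs_rng[of t] t rt by fastforce
      qed
      show "rs t \<le> hi"
      proof (rule ccontr)
        assume "\<not> rs t \<le> hi"
        then have "X hi < X (rs t)" using Xstrict[of hi "rs t"] rt lohi by auto
        then show False using xs_rng[of t] t rt by fastforce
      qed
    qed
    have th: "\<theta> (rs t) > 0" using pos in01 rt by auto
    have dX: "DERIV X (Xinv (xs t)) :> g (rs t)"
      using X_deriv[OF cf in01[OF rt(1,2)]] unfolding X_def g_def rs_def .
    define d where "d = min (rs t - lo') (hi' - rs t)"
    have d: "d > 0" using rt2 lohi by (auto simp: d_def)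
    have ic: "isCont Xinv (X (rs t))"
    proof (rule isCont_inverse_function[OF d, where f = X and g = Xinv and x = "rs t"])
      fix z assume "\<bar>z - rs t\<bar> \<le> d"
      then have z: "lo' \<le> z" "z \<le> hi'" by (auto simp: d_def)
      show "Xinv (X z) = z" by (rule Xinv_X[OF z])
      show "isCont X z" using X_deriv[OF cf in01[OF z]] unfolding X_def by (rule DERIV_isCont)
    qed
    have dinv: "DERIV Xinv (xs t) :> inverse (g (rs t))"
    proof (rule DERIV_inverse_function[where f = X and g = Xinv and x = "xs t" and a = "X lo'" and b = "X hi'", OF dX])
      show "g (rs t) \<noteq> 0" using th by (simp add: g_def)
      show "X lo' < xs t" "xs t < X hi'" using xs_rng t Xlo by fastforce+
      show "X (Xinv y) = y" if "X lo' < y" "y < X hi'" for y using Xinv that by auto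
      show "isCont Xinv (xs t)" using ic rt by simp
    qed
    have "((\<lambda>t. Xinv (xs t)) has_real_derivative inverse (g (rs t)) * xs' t) (at t within {0..1})"
      by (rule DERIV_chain2[OF dinv xs_d])
    then show ?thesis using th by (simp add: rs_def g_def)
  qed
  define rs' where "rs' = (\<lambda>t. sqrt (\<theta> (rs t)) * xs' t)"
  have rsc: "continuous_on {0..1} rs" by (rule DERIV_continuous_on[OF rs_d])
  have thrc: "continuous_on {0..1} (\<lambda>t. \<theta> (rs t))"
    by (rule continuous_on_compose2[OF thc rsc]) (use rs in01 in auto)
  have rs'c: "continuous_on {0..1} rs'" unfolding rs'_def xs'_def
    by (intro continuous_intros thrc)
  have adm: "admissible_path rs rs'"
    unfolding admissible_path_def rs'_def using rs_d rs'c rs in01 unfolding rs'_def by auto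
  have rs0: "rs 0 = r0" using Xinv_X[of r0] lohi lo_le unfolding rs_def xs_def x0_def
    by simp
  have xs1: "xs 1 = x1" unfolding xs_def \<beta>_def using s1 by (simp add: field_simps)
  have rs1: "rs 1 = r1" using Xinv_X[of r1] lohi lo_le xs1 unfolding rs_def x1_def
    by simp
  define P where "P = (\<lambda>t. (rs' t * (1 / sqrt (\<theta> (rs t))) - sinh t / cosh t * Xfun \<theta> (rs t) - \<beta> / cosh t)^2 / 2)"
  have P0: "P t = 0" if t: "t \<in> {0..1}" for t
  proof -
    have th: "\<theta> (rs t) > 0" using pos in01 rs t by auto
    have "X (rs t) = xs t" using rs t by auto
    then have "rs' t * (1 / sqrt (\<theta> (rs t))) - sinh t / cosh t * Xfun \<theta> (rs t) - \<beta> / cosh t = 0"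
    proof -
      have e1: "rs' t * (1 / sqrt (\<theta> (rs t))) = xs' t" using th by (simp add: rs'_def)
      have e2: "Xfun \<theta> (rs t) = xs t" using \<open>X (rs t) = xs t\<close> by (simp add: X_def)
      have c: "cosh t * cosh t = sinh t * sinh t + 1" using cosh_square_eq[of t] by (simp add: power2_eq_square)
      have "xs' t - sinh t / cosh t * xs t - \<beta> / cosh t = \<beta> * (cosh t * cosh t - sinh t * sinh t - 1) / cosh t"
        unfolding xs'_def xs_def by (simp add: field_simps)
      then show ?thesis unfolding e1 e2 using c by simp
    qed
    then show ?thesis by (simp add: P_def)
  qed
  have "integral {0..1} P = 0"
    using integral_cong[of "{0..1}" P "\<lambda>_. 0"] P0 by simp
  then have "action \<theta> rs rs' = Phi \<beta> 1 (Xfun \<theta> (rs 1)) - Phi \<beta> 0 (Xfun \<theta> (rs 0))"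
    using action_formula(1)[OF cf pos adm, of \<beta>] unfolding P_def by simp
  then have "action \<theta> rs rs' = Mf (Xfun \<theta> r0) (Xfun \<theta> r1)"
    using rs0 rs1 unfolding Mf_def \<beta>_def x0_def x1_def X_def by simp
  then show ?thesis using adm rs0 rs1 by blast
qed

lemma Mf_alg:
  "Mf x0 x1 - Mf x0 x0 / 2 - Mf x1 x1 / 2 = 1 / (2 * sinh (1::real)) * (x1 - x0)^2"
proof -
  have c: "cosh (1::real) > 0" "sinh (1::real) > 0" by simp_all
  have cs: "cosh (1::real) * cosh 1 = sinh 1 * sinh 1 + 1" using cosh_square_eq[of "1::real"] by (simp add: power2_eq_square)
  have gen: "\<And>C S::real. C > 0 \<Longrightarrow> S > 0 \<Longrightarrow> C * C = S * S + 1 \<Longrightarrow>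
     (S / C * x1^2/2 + ((x1 - x0 * C) / S) * x1 / C - ((x1 - x0 * C) / S)^2 * S / (2 * C) - ((x1 - x0 * C) / S) * x0)
     - (S / C * x0^2/2 + ((x0 - x0 * C) / S) * x0 / C - ((x0 - x0 * C) / S)^2 * S / (2 * C) - ((x0 - x0 * C) / S) * x0) / 2
     - (S / C * x1^2/2 + ((x1 - x1 * C) / S) * x1 / C - ((x1 - x1 * C) / S)^2 * S / (2 * C) - ((x1 - x1 * C) / S) * x1) / 2
     = 1 / (2 * S) * (x1 - x0)^2"
  proof -
    fix C S :: real assume a: "C > 0" "S > 0" "C * C = S * S + 1"
    show "?thesis C S" using a(1,2) apply (simp add: field_simps power2_eq_square)
      using a(3) by algebra
  qed
  show ?thesis unfolding Mf_def Phi_def using gen[OF c cs] by simp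
qed

theorem mainTheorem13:
  fixes \<theta> :: "real \<Rightarrow> real" and r0 r1 :: real
  assumes "\<theta> C1_differentiable_on {0<..<1}"
    and "\<forall>s\<in>{0<..<1}. \<theta> s > 0"
    and "r0 \<in> {0<..<1}" and "r1 \<in> {0<..<1}"
  shows "Dfun \<theta> r0 r1 = 1 / (2 * sinh (1::real)) * (oint r0 r1 (\<lambda>s. 1 / sqrt (\<theta> s)))^2"
proof -
  note pos = assms(2)
  have thc: "continuous_on {0<..<1} \<theta>"
    using assms(1) by (intro differentiable_imp_continuous_on C1_diff_imp_diff)
  have cf: "continuous_on {0<..<1} (\<lambda>s. 1 / sqrt (\<theta> s))"
    using pos by (intro continuous_intros thc) auto
  have MA: "min_action \<theta> a b = Mf (Xfun \<theta> a) (Xfun \<theta> b)"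
    if a: "a \<in> {0<..<1}" and b: "b \<in> {0<..<1}" for a b
    unfolding min_action_def
  proof (rule cInf_eq_minimum)
    show "Mf (Xfun \<theta> a) (Xfun \<theta> b) \<in> {action \<theta> r r' |r r'. admissible_path r r' \<and> r 0 = a \<and> r 1 = b}"
      using optimal_path[OF cf thc pos a b] by force
  next
    fix y assume "y \<in> {action \<theta> r r' |r r'. admissible_path r r' \<and> r 0 = a \<and> r 1 = b}"
    then obtain r r' where adm: "admissible_path r r'" and e: "r 0 = a" "r 1 = b" and y: "y = action \<theta> r r'"
      by blast
    define \<beta> where "\<beta> = (Xfun \<theta> b - Xfun \<theta> a * cosh 1) / sinh 1"
    show "Mf (Xfun \<theta> a) (Xfun \<theta> b) \<le> y"
      using action_formula[OF cf pos adm, of \<beta>] e y unfolding Mf_def \<beta>_def by simp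
  qed
  have "oint r0 r1 (\<lambda>s. 1 / sqrt (\<theta> s)) = Xfun \<theta> r1 - Xfun \<theta> r0"
    using X_diff[OF cf assms(3,4)] by simp
  then show ?thesis unfolding Dfun_def MA[OF assms(3,4)] MA[OF assms(3,3)] MA[OF assms(4,4)]
    using Mf_alg by simp
qed

end
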